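(* Let $n=2m$, let $\Delta'$ be the simplicial complex on vertex set $\{(i,j):1\le i\le j\le n,\ i+j\ne n+1\}$ whose faces are the sets $F$ with $\prod_{(i,j)\in F}x_{ij}\notin K(2,n)$, where $K(2,n)$ is as in the context. Let $P$ be a facet of $\Delta'$, $P$ a facet of $\Delta_A$ with $A\in\mathcal A$, and let $x\in P$. Then there are exactly two facets of $\Delta'$ containing $P\setminus\{x\}$, namely $P$ and a facet $Q$ described as follows: (i) if $x$ is a turn (left or right) of $P$, then $Q$ is the unique facet of $\Delta_A$ other than $P$ containing $P\setminus\{x\}$ (the path obtained from $P$ by flipping $x$); (ii) if $x$ is isolated with index $i\in A$, then with $A'=(A\setminus\{i\})\cup\{n+1-i\}$, $P\setminus\{x\}$ is a face of $\Delta_{A'}$ contained in a unique facet $Q$ of $\Delta_{A'}$.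
   Context: $K(2,n)\subset K[x_{ij}:1\le i\le j\le n]$ is generated by the products $x_{ij}x_{hk}$ ($i\le j$, $h\le k$) not involving any $x_{a,n+1-a}$ and such that either $a+b=n+1$ for some $a\in\{i,j\}$, $b\in\{h,k\}$, or $i<h$ and $j<k$. $\mathcal A$ is the family of $m$-element subsets $A\subseteq[n]$ with $i+j\ne n+1$ for all $i,j\in A$. For $A=\{a_1<\dots<a_m\}\in\mathcal A$, $T_A=\{(i,j): i\le j,\ i,j\in A\}$ and $\Delta_A=\{F\in\Delta':F\subseteq T_A\}$. It is a fact (established in the paper) that the facets of $\Delta_A$ are exactly the paths in $T_A$ starting at $(a_1,a_m)$ and ending at some diagonal position $(a_i,a_i)$, each step going horizontally left ($(a_r,a_s)\to(a_r,a_{s-1})$) or vertically down ($(a_r,a_s)\to(a_{r+1},a_s)$), and that every facet of $\Delta'$ is a facet of $\Delta_A$ for exactly one $A$. Types of points of such a path $P$: an interior point is a left turn if the step into it is horizontal and the step out is vertical, a right turn if the step in is vertical and the step out horizontal; the last point (if $P$ has at least two points) is a left turn if the last step is horizontal and a right turn if it is vertical; all other points are isolated, and each isolated point is the only point of $P$ having a certain $c\in A$ as row or column index, $c$ being called its index. *)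

theory Defs
  imports Main "HOL-Library.Multiset"
begin

text \<open>Monomials in the variables x_ij are represented as multisets of index pairs.
  A monomial lies in a monomial ideal iff it is divisible by one of the generators.\<close>

definition in_monomial_ideal :: "'a multiset set \<Rightarrow> 'a multiset \<Rightarrow> bool" where
  "in_monomial_ideal G M \<longleftrightarrow> (\<exists>g\<in>G. g \<subseteq># M)"

definition K2_gens :: "nat \<Rightarrow> (nat \<times> nat) multiset set" where
  "K2_gens n = {{#(i,j),(h,k)#} | i j h k.
      1 \<le> i \<and> i \<le> j \<and> j \<le> n \<and> 1 \<le> h \<and> h \<le> k \<and> k \<le> n \<and>
      i + j \<noteq> n + 1 \<and> h + k \<noteq> n + 1 \<and>
      ((\<exists>a\<in>{i,j}. \<exists>b\<in>{h,k}. a + b = n + 1) \<or> (i < h \<and> j < k))}"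

definition vertsD :: "nat \<Rightarrow> (nat \<times> nat) set" where
  "vertsD n = {(i,j). 1 \<le> i \<and> i \<le> j \<and> j \<le> n \<and> i + j \<noteq> n + 1}"

definition DeltaP :: "nat \<Rightarrow> (nat \<times> nat) set set" where
  "DeltaP n = {F. F \<subseteq> vertsD n \<and> \<not> in_monomial_ideal (K2_gens n) (mset_set F)}"

definition facet :: "'a set set \<Rightarrow> 'a set \<Rightarrow> bool" where
  "facet D F \<longleftrightarrow> F \<in> D \<and> (\<forall>G\<in>D. F \<subseteq> G \<longrightarrow> G = F)"

definition calA :: "nat \<Rightarrow> nat \<Rightarrow> nat set set" where
  "calA n m = {A. A \<subseteq> {1..n} \<and> card A = m \<and> (\<forall>i\<in>A. \<forall>j\<in>A. i + j \<noteq> n + 1)}"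

definition T_of :: "nat set \<Rightarrow> (nat \<times> nat) set" where
  "T_of A = {(i,j). i \<le> j \<and> i \<in> A \<and> j \<in> A}"

definition DeltaA :: "nat \<Rightarrow> nat set \<Rightarrow> (nat \<times> nat) set set" where
  "DeltaA n A = {F \<in> DeltaP n. F \<subseteq> T_of A}"

definition adjA :: "nat set \<Rightarrow> nat \<Rightarrow> nat \<Rightarrow> bool" where
  "adjA A v w \<longleftrightarrow> v \<in> A \<and> w \<in> A \<and> v < w \<and> \<not> (\<exists>z\<in>A. v < z \<and> z < w)"

text \<open>Steps of a path P in T_A into / out of the point (u,v).
  Horizontal step: (a_r,a_s) -> (a_r,a_{s-1}); vertical step: (a_r,a_s) -> (a_{r+1},a_s).\<close>
definition in_h :: "nat set \<Rightarrow> (nat \<times> nat) set \<Rightarrow> nat \<times> nat \<Rightarrow> bool" where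
  "in_h A P p \<longleftrightarrow> (\<exists>w. adjA A (snd p) w \<and> (fst p, w) \<in> P)"
definition in_v :: "nat set \<Rightarrow> (nat \<times> nat) set \<Rightarrow> nat \<times> nat \<Rightarrow> bool" where
  "in_v A P p \<longleftrightarrow> (\<exists>w. adjA A w (fst p) \<and> (w, snd p) \<in> P)"
definition out_h :: "nat set \<Rightarrow> (nat \<times> nat) set \<Rightarrow> nat \<times> nat \<Rightarrow> bool" where
  "out_h A P p \<longleftrightarrow> (\<exists>w. adjA A w (snd p) \<and> (fst p, w) \<in> P)"
definition out_v :: "nat set \<Rightarrow> (nat \<times> nat) set \<Rightarrow> nat \<times> nat \<Rightarrow> bool" where
  "out_v A P p \<longleftrightarrow> (\<exists>w. adjA A (fst p) w \<and> (w, snd p) \<in> P)"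

text \<open>Left turn: interior point with horizontal step in and vertical step out, or last point
  (no step out) reached by a horizontal step. Right turn: symmetric.\<close>
definition left_turn :: "nat set \<Rightarrow> (nat \<times> nat) set \<Rightarrow> nat \<times> nat \<Rightarrow> bool" where
  "left_turn A P p \<longleftrightarrow> p \<in> P \<and> in_h A P p \<and>
     (out_v A P p \<or> \<not> (out_h A P p \<or> out_v A P p))"
definition right_turn :: "nat set \<Rightarrow> (nat \<times> nat) set \<Rightarrow> nat \<times> nat \<Rightarrow> bool" where
  "right_turn A P p \<longleftrightarrow> p \<in> P \<and> in_v A P p \<and>
     (out_h A P p \<or> \<not> (out_h A P p \<or> out_v A P p))"
definition isolated :: "nat set \<Rightarrow> (nat \<times> nat) set \<Rightarrow> nat \<times> nat \<Rightarrow> bool" where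
  "isolated A P p \<longleftrightarrow> p \<in> P \<and> \<not> left_turn A P p \<and> \<not> right_turn A P p"

definition is_index :: "(nat \<times> nat) set \<Rightarrow> nat \<times> nat \<Rightarrow> nat \<Rightarrow> bool" where
  "is_index P p c \<longleftrightarrow> (c = fst p \<or> c = snd p) \<and>
     (\<forall>q\<in>P. (c = fst q \<or> c = snd q) \<longrightarrow> q = p)"

end

theory Submission
  imports Defs
begin


definition cmp :: "nat \<times> nat \<Rightarrow> nat \<times> nat \<Rightarrow> bool" where
  "cmp p q \<longleftrightarrow> (fst p < fst q \<and> snd p < snd q) \<or> (fst q < fst p \<and> snd q < snd p)"

definition achain :: "(nat \<times> nat) set \<Rightarrow> bool" where
  "achain S \<longleftrightarrow> (\<forall>p\<in>S. \<forall>q\<in>S. \<not> cmp p q)"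

definition coords :: "(nat \<times> nat) set \<Rightarrow> nat set" where
  "coords S = fst ` S \<union> snd ` S"

definition rk :: "nat set \<Rightarrow> nat \<Rightarrow> nat" where
  "rk B b = card {a\<in>B. a < b}"

lemma T_finite: "finite B \<Longrightarrow> finite (T_of B)"
  by (rule finite_subset[of _ "B \<times> B"]) (auto simp: T_of_def)

lemma rk_mono: assumes "finite B" "a \<in> B" "a < b" shows "rk B a < rk B b"
proof -
  have "{z\<in>B. z < a} \<subset> {z\<in>B. z < b}" using assms by auto
  then show ?thesis unfolding rk_def using assms(1) by (intro psubset_card_mono) auto
qed

lemma rk_le: assumes "finite B" "a \<le> b" shows "rk B a \<le> rk B b"
  unfolding rk_def using assms by (intro card_mono) auto

lemma rk_less_iff: assumes "finite B" "a \<in> B" "b \<in> B" shows "rk B a < rk B b \<longleftrightarrow> a < b"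
  using rk_mono[OF assms(1,2)] rk_mono[OF assms(1,3)] by (metis less_asym' linorder_neqE_nat)

lemma rk_eq_iff: assumes "finite B" "a \<in> B" "b \<in> B" shows "rk B a = rk B b \<longleftrightarrow> a = b"
  using rk_mono[OF assms(1,2)] rk_mono[OF assms(1,3)] by (metis less_irrefl linorder_neqE_nat)

lemma rk_bound: assumes "finite B" "b \<in> B" shows "rk B b < card B"
proof -
  have "{z\<in>B. z < b} \<subset> B" using assms by auto
  then show ?thesis unfolding rk_def using assms(1) by (intro psubset_card_mono) auto
qed

lemma rk_bij: assumes "finite B" shows "bij_betw (rk B) B {..<card B}"
proof -
  have inj: "inj_on (rk B) B" using rk_eq_iff[OF assms] by (meson inj_onI)
  have sub: "rk B ` B \<subseteq> {..<card B}" using rk_bound[OF assms] by auto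
  have "card (rk B ` B) = card {..<card B}" using card_image[OF inj] by simp
  then have "rk B ` B = {..<card B}" using sub by (intro card_subset_eq) auto
  then show ?thesis using inj by (simp add: bij_betw_def)
qed

lemma rk_surj: assumes "finite B" "j < card B" shows "\<exists>b\<in>B. rk B b = j"
  using rk_bij[OF assms(1)] assms(2) unfolding bij_betw_def by (metis imageE lessThan_iff)

definition phi :: "nat set \<Rightarrow> nat \<times> nat \<Rightarrow> nat" where
  "phi B q = rk B (snd q) - rk B (fst q)"

lemma card_bound:
  assumes B: "finite B" and S: "S \<subseteq> T_of B" "achain S"
  shows "card S \<le> card B"
proof -
  have inj: "inj_on (phi B) S"
  proof (rule inj_onI)
    fix p q assume p: "p \<in> S" and q: "q \<in> S" and e: "phi B p = phi B q"
    have pB: "fst p \<in> B" "snd p \<in> B" "fst p \<le> snd p" using p S(1) by (auto simp: T_of_def)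
    have qB: "fst q \<in> B" "snd q \<in> B" "fst q \<le> snd q" using q S(1) by (auto simp: T_of_def)
    have lp: "rk B (fst p) \<le> rk B (snd p)" "rk B (fst q) \<le> rk B (snd q)"
      using rk_le[OF B] pB qB by auto
    have nc: "\<not> cmp p q" using S(2) p q by (auto simp: achain_def)
    have e2: "rk B (snd p) - rk B (fst p) = rk B (snd q) - rk B (fst q)" using e by (simp add: phi_def)
    have "fst p = fst q"
    proof (rule ccontr)
      assume "fst p \<noteq> fst q"
      then consider "fst p < fst q" | "fst q < fst p" by linarith
      then show False
      proof cases
        case 1
        then have "rk B (fst p) < rk B (fst q)" using rk_mono[OF B] pB by auto
        then have "rk B (snd p) < rk B (snd q)" using e2 lp by linarith
        then have "snd p < snd q" using rk_less_iff[OF B] pB qB by auto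
        then show False using nc 1 by (auto simp: cmp_def)
      next
        case 2
        then have "rk B (fst q) < rk B (fst p)" using rk_mono[OF B] qB by auto
        then have "rk B (snd q) < rk B (snd p)" using e2 lp by linarith
        then have "snd q < snd p" using rk_less_iff[OF B] pB qB by auto
        then show False using nc 2 by (auto simp: cmp_def)
      qed
    qed
    moreover then have "rk B (snd p) = rk B (snd q)" using e2 lp by auto
    then have "snd p = snd q" using rk_eq_iff[OF B] pB qB by auto
    ultimately show "p = q" by (simp add: prod_eq_iff)
  qed
  have "phi B ` S \<subseteq> {..<card B}"
  proof
    fix k assume "k \<in> phi B ` S"
    then obtain q where q: "q \<in> S" "k = phi B q" by auto
    then have "snd q \<in> B" using S(1) by (auto simp: T_of_def)
    then have "rk B (snd q) < card B" using rk_bound[OF B] by auto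
    then show "k \<in> {..<card B}" using q by (auto simp: phi_def)
  qed
  then have "card (phi B ` S) \<le> card B" by (metis card_lessThan card_mono finite_lessThan)
  then show ?thesis using card_image[OF inj] by simp
qed


lemma extend:
  assumes B: "finite B" and S: "S \<subseteq> T_of B" "achain S" and lt: "card S < card B"
  shows "\<exists>t\<in>T_of B. t \<notin> S \<and> (\<forall>q\<in>S. \<not> cmp t q)"
proof -
  define m where "m = card B"
  have finS: "finite S" using T_finite[OF B] S(1) finite_subset by blast
  have "card (phi B ` S) \<le> card S" using card_image_le[OF finS] .
  then have "card (phi B ` S) < card {..<m}" using lt m_def by simp
  then have "\<not> {..<m} \<subseteq> phi B ` S" using card_mono[of "phi B ` S" "{..<m}"] finS
    by (metis finite_imageI not_le)
  then obtain k where k: "k < m" "k \<notin> phi B ` S" by auto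
  define al where "al q = rk B (fst q)" for q :: "nat \<times> nat"
  define be where "be q = rk B (snd q)" for q :: "nat \<times> nat"
  have inB: "fst q \<in> B" "snd q \<in> B" "fst q \<le> snd q" if "q \<in> S" for q
    using that S(1) by (auto simp: T_of_def)
  have albe: "al q \<le> be q" "be q < m" if "q \<in> S" for q
    using rk_le[OF B] rk_bound[OF B] inB[OF that] unfolding al_def be_def m_def by auto
  define L where "L q = min (al q) (be q - k)" for q :: "nat \<times> nat"
  define j where "j = Max (insert 0 (L ` S))"
  have fin: "finite (insert 0 (L ` S))" using finS by simp
  have jge: "L q \<le> j" if "q \<in> S" for q unfolding j_def using fin that by (intro Max_ge) auto
  have jin: "j \<in> insert 0 (L ` S)" unfolding j_def using fin by (intro Max_in) auto
  have pair: "L q0 \<le> max (al q) (be q - k)" if "q0 \<in> S" "q \<in> S" for q0 q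
  proof (cases "al q0 \<le> al q")
    case True then show ?thesis unfolding L_def by simp
  next
    case False
    then have "fst q < fst q0" using rk_le[OF B] unfolding al_def by (metis not_le_imp_less not_less)
    moreover have "\<not> cmp q0 q" using S(2) that by (auto simp: achain_def)
    ultimately have "snd q0 \<le> snd q" by (auto simp: cmp_def)
    then have "be q0 \<le> be q" using rk_le[OF B] unfolding be_def by auto
    then show ?thesis unfolding L_def by simp
  qed
  have jle: "j \<le> max (al q) (be q - k)" if "q \<in> S" for q
  proof -
    from jin consider "j = 0" | q0 where "q0 \<in> S" "j = L q0" by blast
    then show ?thesis
    proof cases
      case 1 then show ?thesis by simp
    next
      case 2 then show ?thesis using pair[OF 2(1) that] by simp
    qed
  qed
  have jk: "j + k < m"
  proof -
    { assume "j = 0" then have ?thesis using k by simp }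
    moreover
    { fix q0 assume "q0 \<in> S" "j = L q0"
      then have "L q0 + k \<le> be q0 \<or> L q0 = 0" unfolding L_def by (cases "k \<le> be q0") auto
      then have ?thesis using albe[of q0] k \<open>q0 \<in> S\<close> \<open>j = L q0\<close> by auto }
    ultimately show ?thesis using jin by auto
  qed
  obtain a where a: "a \<in> B" "rk B a = j" using rk_surj[OF B, of j] jk m_def by auto
  obtain b where b: "b \<in> B" "rk B b = j + k" using rk_surj[OF B, of "j+k"] jk m_def by auto
  have ab: "a \<le> b" using rk_less_iff[OF B b(1) a(1)] a b by auto
  have tT: "(a, b) \<in> T_of B" using a b ab by (auto simp: T_of_def)
  have "phi B (a, b) = k" using a b by (simp add: phi_def)
  then have tS: "(a, b) \<notin> S" using k(2) by force
  have "\<not> cmp (a, b) q" if q: "q \<in> S" for q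
  proof
    assume c: "cmp (a, b) q"
    have e1: "a < fst q \<longleftrightarrow> j < al q" using rk_less_iff[OF B a(1) inB(1)[OF q]] a unfolding al_def by simp
    have e2: "fst q < a \<longleftrightarrow> al q < j" using rk_less_iff[OF B inB(1)[OF q] a(1)] a unfolding al_def by simp
    have e3: "b < snd q \<longleftrightarrow> j + k < be q" using rk_less_iff[OF B b(1) inB(2)[OF q]] b unfolding be_def by simp
    have e4: "snd q < b \<longleftrightarrow> be q < j + k" using rk_less_iff[OF B inB(2)[OF q] b(1)] b unfolding be_def by simp
    have "(j < al q \<and> j + k < be q) \<or> (al q < j \<and> be q < j + k)"
      using c e1 e2 e3 e4 by (auto simp: cmp_def)
    moreover have "min (al q) (be q - k) \<le> j" using jge[OF q] unfolding L_def .
    moreover note jle[OF q] albe[OF q]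
    ultimately show False by (cases "al q \<le> be q - k") (auto simp: min_def max_def)
  qed
  then show ?thesis using tT tS by blast
qed

lemma maximal:
  assumes B: "finite B" and S: "S \<subseteq> T_of B" "achain S" and eq: "card S = card B"
    and t: "t \<in> T_of B" "t \<notin> S"
  shows "\<exists>q\<in>S. cmp t q"
proof (rule ccontr)
  assume "\<not> ?thesis"
  then have nc: "\<forall>q\<in>S. \<not> cmp t q" by blast
  have "achain (insert t S)" using S(2) nc unfolding achain_def cmp_def by auto
  moreover have "insert t S \<subseteq> T_of B" using S t by auto
  ultimately have "card (insert t S) \<le> card B" using card_bound[OF B] by blast
  moreover have "finite S" using T_finite[OF B] S(1) finite_subset by blast
  ultimately show False using eq t(2) by simp
qed

lemma cover:
  assumes B: "finite B" and S: "S \<subseteq> T_of B" "achain S" and eq: "card S = card B"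
    and b: "b \<in> B"
  shows "b \<in> coords S"
proof (rule ccontr)
  assume nb: "b \<notin> coords S"
  have "S \<subseteq> T_of (B - {b})" using S(1) nb by (force simp: T_of_def coords_def)
  then have "card S \<le> card (B - {b})" using card_bound[of "B - {b}" S] B S(2) by auto
  moreover have "card (B - {b}) = card B - 1" using b B by (simp add: card_Diff_singleton)
  moreover have "card B > 0" using b B card_gt_0_iff by blast
  ultimately show False using eq by linarith
qed


lemma unique_aux:
  assumes B: "finite B" and S: "S \<subseteq> T_of B" "achain S" and eq: "card S = card B"
    and c: "c \<notin> B"
    and t1: "t1 \<in> T_of (insert c B)" "c = fst t1 \<or> c = snd t1" "\<forall>q\<in>S. \<not> cmp t1 q"
    and t2: "t2 \<in> T_of (insert c B)" "c = fst t2 \<or> c = snd t2" "\<forall>q\<in>S. \<not> cmp t2 q"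
    and lt: "fst t1 < fst t2" "snd t1 < snd t2"
  shows False
proof -
  have o1: "fst t1 \<le> snd t1" "fst t2 \<le> snd t2" using t1(1) t2(1) by (auto simp: T_of_def)
  have s1: "snd t1 = c" using t1(2) t2(2) lt o1 by auto
  have f2: "fst t2 = c" using t1(2) t2(2) lt o1 by auto
  have u1: "fst t1 \<in> B" "fst t1 < c" using t1(1) lt f2 by (auto simp: T_of_def)
  have v2: "c < snd t2" using lt s1 by auto
  have qS: "fst q < c \<and> c < snd q" if q: "q \<in> S" for q
  proof -
    have qB: "fst q \<in> B" "snd q \<in> B" "fst q \<le> snd q" using q S(1) by (auto simp: T_of_def)
    then have ne: "fst q \<noteq> c" "snd q \<noteq> c" using c by auto
    have n1: "\<not> cmp t1 q" and n2: "\<not> cmp t2 q" using t1(3) t2(3) q by auto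
    show ?thesis
    proof (rule ccontr)
      assume "\<not> ?thesis"
      then consider "snd q < c" | "c < fst q" using ne by linarith
      then show False
      proof cases
        case 1 then show False using n2 f2 v2 qB(3) by (auto simp: cmp_def)
      next
        case 2 then show False using n1 s1 u1 qB(3) by (auto simp: cmp_def)
      qed
    qed
  qed
  define b where "b = Max {a\<in>B. a < c}"
  have fin: "finite {a\<in>B. a < c}" using B by simp
  have "b \<in> {a\<in>B. a < c}" using Max_in[OF fin] u1 unfolding b_def by blast
  then have bin: "b \<in> B" "b < c" by auto
  have bmax: "a \<le> b" if "a \<in> B" "a < c" for a using Max_ge[OF fin] that unfolding b_def by auto
  have bbT: "(b, b) \<in> T_of B" using bin by (auto simp: T_of_def)
  have bbS: "(b, b) \<notin> S" using qS bin by fastforce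
  obtain q where q: "q \<in> S" "cmp (b, b) q" using maximal[OF B S eq bbT bbS] by blast
  have "fst q \<in> B" using q S(1) by (auto simp: T_of_def)
  then show False using q qS[OF q(1)] bmax[of "fst q"] bin by (auto simp: cmp_def)
qed

lemma unique_c:
  assumes B: "finite B" and S: "S \<subseteq> T_of B" "achain S" and eq: "card S = card B"
    and c: "c \<notin> B"
    and t1: "t1 \<in> T_of (insert c B)" "c = fst t1 \<or> c = snd t1" "\<forall>q\<in>S. \<not> cmp t1 q"
    and t2: "t2 \<in> T_of (insert c B)" "c = fst t2 \<or> c = snd t2" "\<forall>q\<in>S. \<not> cmp t2 q"
  shows "t1 = t2"
proof (rule ccontr)
  assume ne: "t1 \<noteq> t2"
  show False
  proof (cases "cmp t1 t2")
    case True
    then consider "fst t1 < fst t2 \<and> snd t1 < snd t2" | "fst t2 < fst t1 \<and> snd t2 < snd t1"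
      by (auto simp: cmp_def)
    then show False
    proof cases
      case 1 then show False using unique_aux[OF B S eq c t1 t2] by auto
    next
      case 2 then show False using unique_aux[OF B S eq c t2 t1] by auto
    qed
  next
    case False
    have nS: "t1 \<notin> S" "t2 \<notin> S" using S(1) t1(2) t2(2) c by (auto simp: T_of_def)
    have ac: "achain (insert t1 (insert t2 S))"
      using S(2) t1(3) t2(3) False unfolding achain_def cmp_def by auto
    have sub: "insert t1 (insert t2 S) \<subseteq> T_of (insert c B)" using S(1) t1(1) t2(1)
      by (auto simp: T_of_def)
    have "card (insert t1 (insert t2 S)) \<le> card (insert c B)"
      using card_bound[OF _ sub ac] B by simp
    moreover have "finite S" using T_finite[OF B] S(1) finite_subset by blast
    ultimately show False using nS ne eq c B by simp
  qed
qed



lemma adj_up: "adjA A a b \<Longrightarrow> z \<in> A \<Longrightarrow> a < z \<Longrightarrow> b \<le> z"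
  unfolding adjA_def by (meson not_le)
lemma adj_down: "adjA A a b \<Longrightarrow> z \<in> A \<Longrightarrow> z < b \<Longrightarrow> z \<le> a"
  unfolding adjA_def by (meson not_le)

lemma succ_ex: assumes "finite A" "r \<in> A" "s \<in> A" "r < s"
  shows "\<exists>w. adjA A r w \<and> w \<le> s"
proof -
  define w where "w = Min {a\<in>A. r < a}"
  have fin: "finite {a\<in>A. r < a}" using assms by simp
  have "w \<in> {a\<in>A. r < a}" unfolding w_def using Min_in[OF fin] assms by blast
  moreover have "\<And>z. z \<in> A \<Longrightarrow> r < z \<Longrightarrow> w \<le> z" unfolding w_def using Min_le[OF fin] by auto
  ultimately show ?thesis using assms unfolding adjA_def by (metis mem_Collect_eq not_le)
qed

lemma pred_ex: assumes "finite A" "r \<in> A" "s \<in> A" "r < s"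
  shows "\<exists>w. adjA A w s \<and> r \<le> w"
proof -
  define w where "w = Max {a\<in>A. a < s}"
  have fin: "finite {a\<in>A. a < s}" using assms by simp
  have "w \<in> {a\<in>A. a < s}" unfolding w_def using Max_in[OF fin] assms by blast
  moreover have "\<And>z. z \<in> A \<Longrightarrow> z < s \<Longrightarrow> z \<le> w" unfolding w_def using Max_ge[OF fin] by auto
  ultimately show ?thesis using assms unfolding adjA_def by (metis mem_Collect_eq not_le)
qed

lemma no_out:
  assumes A: "finite A" and P: "P \<subseteq> T_of A" "achain P"
    and mx: "\<And>t. t \<in> T_of A \<Longrightarrow> t \<notin> P \<Longrightarrow> \<exists>q\<in>P. cmp t q"
    and x: "(r, s) \<in> P" and rs: "r < s"
  shows "out_h A P (r, s) \<or> out_v A P (r, s)"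
proof (rule ccontr)
  assume no: "\<not> ?thesis"
  have rA: "r \<in> A" "s \<in> A" using x P(1) by (auto simp: T_of_def)
  obtain sp where sp: "adjA A sp s" "r \<le> sp" using pred_ex[OF A rA rs] by blast
  obtain rn where rn: "adjA A r rn" "rn \<le> s" using succ_ex[OF A rA rs] by blast
  have t1T: "(r, sp) \<in> T_of A" using sp rA by (auto simp: T_of_def adjA_def)
  have t1P: "(r, sp) \<notin> P" using no sp(1) by (auto simp: out_h_def)
  have t2T: "(rn, s) \<in> T_of A" using rn rA by (auto simp: T_of_def adjA_def)
  have t2P: "(rn, s) \<notin> P" using no rn(1) by (auto simp: out_v_def)
  obtain p1 where p1: "p1 \<in> P" "cmp (r, sp) p1" using mx[OF t1T t1P] by blast
  obtain p2 where p2: "p2 \<in> P" "cmp (rn, s) p2" using mx[OF t2T t2P] by blast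
  have nx1: "\<not> cmp p1 (r, s)" "\<not> cmp p2 (r, s)" "\<not> cmp p1 p2" using P(2) p1 p2 x
    by (auto simp: achain_def)
  have A1: "fst p1 \<in> A" "snd p1 \<in> A" "fst p2 \<in> A" "snd p2 \<in> A"
    using p1 p2 P(1) by (auto simp: T_of_def)
  have spl: "sp < s" using sp by (auto simp: adjA_def)
  have rnl: "r < rn" using rn by (auto simp: adjA_def)
  have a1: "snd p1 = s \<and> r < fst p1"
  proof -
    have "fst p1 > r \<and> snd p1 > sp" using p1(2) nx1(1) spl by (auto simp: cmp_def)
    moreover then have "snd p1 \<ge> s" using adj_up[OF sp(1) A1(2)] by auto
    ultimately show ?thesis using nx1(1) by (auto simp: cmp_def)
  qed
  have a2: "fst p2 = r \<and> snd p2 < s"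
  proof -
    have "fst p2 < rn \<and> snd p2 < s" using p2(2) nx1(2) rnl by (auto simp: cmp_def)
    moreover then have "fst p2 \<le> r" using adj_down[OF rn(1) A1(3)] by auto
    ultimately show ?thesis using nx1(2) by (auto simp: cmp_def)
  qed
  show False using a1 a2 nx1(3) by (auto simp: cmp_def)
qed


definition good :: "nat set \<Rightarrow> (nat \<times> nat) set \<Rightarrow> nat \<times> nat \<Rightarrow> nat \<times> nat \<Rightarrow> bool" where
  "good A P x y \<longleftrightarrow> y \<in> T_of A \<and> y \<notin> P \<and> (\<forall>q\<in>P-{x}. \<not> cmp y q) \<and>
     (\<forall>t\<in>T_of A. t \<notin> P-{x} \<and> (\<forall>q\<in>P-{x}. \<not> cmp t q) \<longrightarrow> t = x \<or> t = y) \<and>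
     fst x \<in> coords (P-{x}) \<and> snd x \<in> coords (P-{x})"

lemma good_intro:
  assumes P: "achain P" and x: "x \<in> P"
    and mx: "\<And>t. t \<in> T_of A \<Longrightarrow> t \<notin> P \<Longrightarrow> \<exists>q\<in>P. cmp t q"
    and y: "y \<in> T_of A" "cmp y x" "\<forall>q\<in>P-{x}. \<not> cmp y q"
    and loc: "\<And>t. t \<in> T_of A \<Longrightarrow> cmp t x \<Longrightarrow> \<forall>q\<in>P-{x}. \<not> cmp t q \<Longrightarrow> t = y"
    and co: "fst x \<in> coords (P-{x})" "snd x \<in> coords (P-{x})"
  shows "good A P x y"
proof -
  have yP: "y \<notin> P" using P x y(2) by (auto simp: achain_def)
  have "t = x \<or> t = y" if t: "t \<in> T_of A" "t \<notin> P-{x}" "\<forall>q\<in>P-{x}. \<not> cmp t q" for t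
  proof (cases "t = x")
    case False
    then have "t \<notin> P" using t by auto
    then obtain q where q: "q \<in> P" "cmp t q" using mx[OF t(1)] by blast
    then have "q = x" using t(3) by auto
    then show ?thesis using loc[OF t(1)] q t(3) by auto
  qed simp
  then show ?thesis unfolding good_def using y yP co by blast
qed

lemma cmp_simp: "cmp (a, b) (c, d) \<longleftrightarrow> (a < c \<and> b < d) \<or> (c < a \<and> d < b)"
  by (simp add: cmp_def)

lemma case_LI:
  assumes A: "finite A" and P: "P \<subseteq> T_of A" "achain P"
    and mx: "\<And>t. t \<in> T_of A \<Longrightarrow> t \<notin> P \<Longrightarrow> \<exists>q\<in>P. cmp t q"
    and x: "(r, s) \<in> P" and n1: "adjA A s w" "(r, w) \<in> P" and n2: "adjA A r w'" "(w', s) \<in> P"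
  shows "good A P (r, s) (w', w)"
proof -
  have ws: "s < w" "r < w'" "w \<in> A" "w' \<in> A" using n1 n2 by (auto simp: adjA_def)
  have w's: "w' \<le> s" using n2 P(1) by (auto simp: T_of_def)
  have in1: "(r, w) \<in> P - {(r, s)}" "(w', s) \<in> P - {(r, s)}" using n1 n2 ws by auto
  show ?thesis
  proof (rule good_intro[OF P(2) x mx])
    show "(w', w) \<in> T_of A" using ws w's by (auto simp: T_of_def)
    show "cmp (w', w) (r, s)" using ws by (simp add: cmp_def)
    show "\<forall>q\<in>P-{(r, s)}. \<not> cmp (w', w) q"
    proof
      fix q assume q: "q \<in> P - {(r, s)}"
      obtain a b where qab: "q = (a, b)" by fastforce
      have ab: "a \<in> A" "b \<in> A" using q P(1) qab by (auto simp: T_of_def)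
      have nc: "\<not> cmp (a, b) (r, s)" "\<not> cmp (a, b) (r, w)" "\<not> cmp (a, b) (w', s)"
        using q P(2) x n1 n2 qab by (auto simp: achain_def)
      have d1: "a < w' \<Longrightarrow> a \<le> r" using adj_down[OF n2(1) ab(1)] .
      have d2: "b < w \<Longrightarrow> b \<le> s" using adj_down[OF n1(1) ab(2)] .
      have "(a, b) \<noteq> (r, s)" using q qab by auto
      then show "\<not> cmp (w', w) q" using nc d1 d2 ws unfolding qab cmp_simp by fastforce
    qed
    fix t assume t: "t \<in> T_of A" "cmp t (r, s)" "\<forall>q\<in>P-{(r, s)}. \<not> cmp t q"
    obtain u v where tuv: "t = (u, v)" by fastforce
    have uv: "u \<in> A" "v \<in> A" using t(1) tuv by (auto simp: T_of_def)
    have nc: "\<not> cmp (u, v) (r, w)" "\<not> cmp (u, v) (w', s)" using t(3) in1 tuv by auto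
    have d1: "r < u \<Longrightarrow> w' \<le> u" using adj_up[OF n2(1) uv(1)] .
    have d2: "s < v \<Longrightarrow> w \<le> v" using adj_up[OF n1(1) uv(2)] .
    show "t = (w', w)" using t(2) nc d1 d2 ws unfolding tuv cmp_simp by fastforce
  next
    show "fst (r, s) \<in> coords (P - {(r, s)})" using in1 by (force simp: coords_def)
    show "snd (r, s) \<in> coords (P - {(r, s)})" using in1 by (force simp: coords_def)
  qed
qed


lemma case_LL:
  assumes A: "finite A" and P: "P \<subseteq> T_of A" "achain P"
    and mx: "\<And>t. t \<in> T_of A \<Longrightarrow> t \<notin> P \<Longrightarrow> \<exists>q\<in>P. cmp t q"
    and x: "(r, r) \<in> P" and n1: "adjA A r w" "(r, w) \<in> P"
  shows "good A P (r, r) (w, w)"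
proof -
  have ws: "r < w" "w \<in> A" using n1 by (auto simp: adjA_def)
  have in1: "(r, w) \<in> P - {(r, r)}" using n1 ws by auto
  show ?thesis
  proof (rule good_intro[OF P(2) x mx])
    show "(w, w) \<in> T_of A" using ws by (auto simp: T_of_def)
    show "cmp (w, w) (r, r)" using ws by (simp add: cmp_def)
    show "\<forall>q\<in>P-{(r, r)}. \<not> cmp (w, w) q"
    proof
      fix q assume q: "q \<in> P - {(r, r)}"
      obtain a b where qab: "q = (a, b)" by fastforce
      have ab: "a \<in> A" "b \<in> A" "a \<le> b" using q P(1) qab by (auto simp: T_of_def)
      have nc: "\<not> cmp (a, b) (r, r)" "\<not> cmp (a, b) (r, w)"
        using q P(2) x n1 qab by (auto simp: achain_def)
      have d1: "a < w \<Longrightarrow> a \<le> r" using adj_down[OF n1(1) ab(1)] .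
      have d2: "b < w \<Longrightarrow> b \<le> r" using adj_down[OF n1(1) ab(2)] .
      have "(a, b) \<noteq> (r, r)" using q qab by auto
      then show "\<not> cmp (w, w) q" using nc d1 d2 ws ab(3) unfolding qab cmp_simp by fastforce
    qed
    fix t assume t: "t \<in> T_of A" "cmp t (r, r)" "\<forall>q\<in>P-{(r, r)}. \<not> cmp t q"
    obtain u v where tuv: "t = (u, v)" by fastforce
    have uv: "u \<in> A" "v \<in> A" "u \<le> v" using t(1) tuv by (auto simp: T_of_def)
    have nc: "\<not> cmp (u, v) (r, w)" using t(3) in1 tuv by auto
    have d1: "r < u \<Longrightarrow> w \<le> u" using adj_up[OF n1(1) uv(1)] .
    have d2: "r < v \<Longrightarrow> w \<le> v" using adj_up[OF n1(1) uv(2)] .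
    show "t = (w, w)" using t(2) nc d1 d2 ws uv(3) unfolding tuv cmp_simp by fastforce
  next
    show "fst (r, r) \<in> coords (P - {(r, r)})" using in1 by (force simp: coords_def)
    show "snd (r, r) \<in> coords (P - {(r, r)})" using in1 by (force simp: coords_def)
  qed
qed

lemma case_RI:
  assumes A: "finite A" and P: "P \<subseteq> T_of A" "achain P"
    and mx: "\<And>t. t \<in> T_of A \<Longrightarrow> t \<notin> P \<Longrightarrow> \<exists>q\<in>P. cmp t q"
    and x: "(r, s) \<in> P" and n1: "adjA A w r" "(w, s) \<in> P" and n2: "adjA A w' s" "(r, w') \<in> P"
  shows "good A P (r, s) (w, w')"
proof -
  have ws: "w < r" "w' < s" "w \<in> A" "w' \<in> A" using n1 n2 by (auto simp: adjA_def)
  have w's: "r \<le> w'" using n2 P(1) by (auto simp: T_of_def)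
  have in1: "(w, s) \<in> P - {(r, s)}" "(r, w') \<in> P - {(r, s)}" using n1 n2 ws by auto
  show ?thesis
  proof (rule good_intro[OF P(2) x mx])
    show "(w, w') \<in> T_of A" using ws w's by (auto simp: T_of_def)
    show "cmp (w, w') (r, s)" using ws by (simp add: cmp_def)
    show "\<forall>q\<in>P-{(r, s)}. \<not> cmp (w, w') q"
    proof
      fix q assume q: "q \<in> P - {(r, s)}"
      obtain a b where qab: "q = (a, b)" by fastforce
      have ab: "a \<in> A" "b \<in> A" "a \<le> b" using q P(1) qab by (auto simp: T_of_def)
      have nc: "\<not> cmp (a, b) (r, s)" "\<not> cmp (a, b) (w, s)" "\<not> cmp (a, b) (r, w')"
        using q P(2) x n1 n2 qab by (auto simp: achain_def)
      have d1: "w < a \<Longrightarrow> r \<le> a" using adj_up[OF n1(1) ab(1)] .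
      have d2: "w' < b \<Longrightarrow> s \<le> b" using adj_up[OF n2(1) ab(2)] .
      have "(a, b) \<noteq> (r, s)" using q qab by auto
      then show "\<not> cmp (w, w') q" using nc d1 d2 ws ab(3) unfolding qab cmp_simp by fastforce
    qed
    fix t assume t: "t \<in> T_of A" "cmp t (r, s)" "\<forall>q\<in>P-{(r, s)}. \<not> cmp t q"
    obtain u v where tuv: "t = (u, v)" by fastforce
    have uv: "u \<in> A" "v \<in> A" "u \<le> v" using t(1) tuv by (auto simp: T_of_def)
    have nc: "\<not> cmp (u, v) (w, s)" "\<not> cmp (u, v) (r, w')" using t(3) in1 tuv by auto
    have d1: "u < r \<Longrightarrow> u \<le> w" using adj_down[OF n1(1) uv(1)] .
    have d2: "v < s \<Longrightarrow> v \<le> w'" using adj_down[OF n2(1) uv(2)] .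
    show "t = (w, w')" using t(2) nc d1 d2 ws uv(3) unfolding tuv cmp_simp by fastforce
  next
    show "fst (r, s) \<in> coords (P - {(r, s)})" using in1 by (force simp: coords_def)
    show "snd (r, s) \<in> coords (P - {(r, s)})" using in1 by (force simp: coords_def)
  qed
qed

lemma case_RL:
  assumes A: "finite A" and P: "P \<subseteq> T_of A" "achain P"
    and mx: "\<And>t. t \<in> T_of A \<Longrightarrow> t \<notin> P \<Longrightarrow> \<exists>q\<in>P. cmp t q"
    and x: "(r, r) \<in> P" and n1: "adjA A w r" "(w, r) \<in> P"
  shows "good A P (r, r) (w, w)"
proof -
  have ws: "w < r" "w \<in> A" using n1 by (auto simp: adjA_def)
  have in1: "(w, r) \<in> P - {(r, r)}" using n1 ws by auto
  show ?thesis
  proof (rule good_intro[OF P(2) x mx])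
    show "(w, w) \<in> T_of A" using ws by (auto simp: T_of_def)
    show "cmp (w, w) (r, r)" using ws by (simp add: cmp_def)
    show "\<forall>q\<in>P-{(r, r)}. \<not> cmp (w, w) q"
    proof
      fix q assume q: "q \<in> P - {(r, r)}"
      obtain a b where qab: "q = (a, b)" by fastforce
      have ab: "a \<in> A" "b \<in> A" "a \<le> b" using q P(1) qab by (auto simp: T_of_def)
      have nc: "\<not> cmp (a, b) (r, r)" "\<not> cmp (a, b) (w, r)"
        using q P(2) x n1 qab by (auto simp: achain_def)
      have d1: "w < a \<Longrightarrow> r \<le> a" using adj_up[OF n1(1) ab(1)] .
      have d2: "w < b \<Longrightarrow> r \<le> b" using adj_up[OF n1(1) ab(2)] .
      have "(a, b) \<noteq> (r, r)" using q qab by auto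
      then show "\<not> cmp (w, w) q" using nc d1 d2 ws ab(3) unfolding qab cmp_simp by fastforce
    qed
    fix t assume t: "t \<in> T_of A" "cmp t (r, r)" "\<forall>q\<in>P-{(r, r)}. \<not> cmp t q"
    obtain u v where tuv: "t = (u, v)" by fastforce
    have uv: "u \<in> A" "v \<in> A" "u \<le> v" using t(1) tuv by (auto simp: T_of_def)
    have nc: "\<not> cmp (u, v) (w, r)" using t(3) in1 tuv by auto
    have d1: "u < r \<Longrightarrow> u \<le> w" using adj_down[OF n1(1) uv(1)] .
    have d2: "v < r \<Longrightarrow> v \<le> w" using adj_down[OF n1(1) uv(2)] .
    show "t = (w, w)" using t(2) nc d1 d2 ws uv(3) unfolding tuv cmp_simp by fastforce
  next
    show "fst (r, r) \<in> coords (P - {(r, r)})" using in1 by (force simp: coords_def)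
    show "snd (r, r) \<in> coords (P - {(r, r)})" using in1 by (force simp: coords_def)
  qed
qed

lemma turn_good:
  assumes A: "finite A" and P: "P \<subseteq> T_of A" "achain P"
    and mx: "\<And>t. t \<in> T_of A \<Longrightarrow> t \<notin> P \<Longrightarrow> \<exists>q\<in>P. cmp t q"
    and x: "x \<in> P" and turn: "left_turn A P x \<or> right_turn A P x"
  shows "\<exists>y. good A P x y"
proof -
  obtain r s where xrs: "x = (r, s)" by fastforce
  have rs: "r \<le> s" using x P(1) xrs by (auto simp: T_of_def)
  have diag: "r = s" if "\<not> (out_h A P x \<or> out_v A P x)"
    using no_out[OF A P mx, of r s] x xrs rs that by fastforce
  from turn show ?thesis
  proof
    assume L: "left_turn A P x"
    then obtain w where w: "adjA A s w" "(r, w) \<in> P" unfolding left_turn_def in_h_def xrs by auto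
    from L consider "out_v A P x" | "\<not> (out_h A P x \<or> out_v A P x)" unfolding left_turn_def by blast
    then show ?thesis
    proof cases
      case 1
      then obtain w' where "adjA A r w'" "(w', s) \<in> P" unfolding out_v_def xrs by auto
      then show ?thesis using case_LI[OF A P mx] x xrs w by blast
    next
      case 2
      then have "r = s" using diag by blast
      then show ?thesis using case_LL[OF A P mx] x xrs w by blast
    qed
  next
    assume R: "right_turn A P x"
    then obtain w where w: "adjA A w r" "(w, s) \<in> P" unfolding right_turn_def in_v_def xrs by auto
    from R consider "out_h A P x" | "\<not> (out_h A P x \<or> out_v A P x)" unfolding right_turn_def by blast
    then show ?thesis
    proof cases
      case 1
      then obtain w' where "adjA A w' s" "(r, w') \<in> P" unfolding out_h_def xrs by auto
      then show ?thesis using case_RI[OF A P mx] x xrs w by blast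
    next
      case 2
      then have "r = s" using diag by blast
      then show ?thesis using case_RL[OF A P mx] x xrs w by blast
    qed
  qed
qed



definition badpair :: "nat \<Rightarrow> nat \<times> nat \<Rightarrow> nat \<times> nat \<Rightarrow> bool" where
  "badpair n p q \<longleftrightarrow> (\<exists>a\<in>{fst p, snd p}. \<exists>b\<in>{fst q, snd q}. a + b = n + 1) \<or> cmp p q"

lemma vertsD_sub: "vertsD n \<subseteq> {1..n} \<times> {1..n}"
  by (auto simp: vertsD_def)

lemma vertsD_fin: "finite (vertsD n)"
  using vertsD_sub finite_subset by blast

lemma sub2: assumes "finite F"
  shows "{#p, q#} \<subseteq># mset_set F \<longleftrightarrow> p \<noteq> q \<and> p \<in> F \<and> q \<in> F"
proof
  assume h: "{#p, q#} \<subseteq># mset_set F"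
  have c1: "count {#p, q#} p \<le> count (mset_set F) p" "count {#p, q#} q \<le> count (mset_set F) q"
    using h unfolding subseteq_mset_def by blast+
  have cnt: "\<And>a. count (mset_set F) a = (if a \<in> F then 1 else 0)" using assms count_mset_set by auto
  have "count {#p, q#} p = (if p = q then 2 else 1)" "count {#p, q#} q = (if p = q then 2 else 1)" by auto
  then show "p \<noteq> q \<and> p \<in> F \<and> q \<in> F" using c1 cnt
    by (auto split: if_splits)
next
  assume h: "p \<noteq> q \<and> p \<in> F \<and> q \<in> F"
  show "{#p, q#} \<subseteq># mset_set F"
    unfolding subseteq_mset_def
  proof
    fix a
    have "count {#p, q#} a = (if a = p then 1 else 0) + (if a = q then 1 else 0)" by simp
    moreover have "count (mset_set F) a = (if a \<in> F then 1 else 0)" using assms count_mset_set by auto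
    ultimately show "count {#p, q#} a \<le> count (mset_set F) a" using h by auto
  qed
qed

lemma DeltaP_iff:
  assumes F: "F \<subseteq> vertsD n"
  shows "F \<in> DeltaP n \<longleftrightarrow> (\<forall>p\<in>F. \<forall>q\<in>F. p \<noteq> q \<longrightarrow> \<not> badpair n p q)"
proof -
  have fin: "finite F" using F vertsD_fin finite_subset by blast
  have "in_monomial_ideal (K2_gens n) (mset_set F) \<longleftrightarrow> (\<exists>p\<in>F. \<exists>q\<in>F. p \<noteq> q \<and> badpair n p q)"
  proof
    assume "in_monomial_ideal (K2_gens n) (mset_set F)"
    then obtain i j h k where g: "{#(i,j),(h,k)#} \<subseteq># mset_set F"
      "((\<exists>a\<in>{i,j}. \<exists>b\<in>{h,k}. a + b = n + 1) \<or> (i < h \<and> j < k))"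
      unfolding in_monomial_ideal_def K2_gens_def by blast
    then have "(i,j) \<noteq> (h,k)" "(i,j) \<in> F" "(h,k) \<in> F" using sub2[OF fin] by auto
    moreover have "badpair n (i,j) (h,k)" using g(2) by (auto simp: badpair_def cmp_def)
    ultimately show "\<exists>p\<in>F. \<exists>q\<in>F. p \<noteq> q \<and> badpair n p q" by blast
  next
    assume "\<exists>p\<in>F. \<exists>q\<in>F. p \<noteq> q \<and> badpair n p q"
    then obtain i j h k where pq: "(i,j) \<in> F" "(h,k) \<in> F" "(i,j) \<noteq> (h,k)" "badpair n (i,j) (h,k)"
      by auto
    have v: "(i,j) \<in> vertsD n" "(h,k) \<in> vertsD n" using pq F by auto
    show "in_monomial_ideal (K2_gens n) (mset_set F)"
    proof (cases "(\<exists>a\<in>{i,j}. \<exists>b\<in>{h,k}. a + b = n + 1) \<or> (i < h \<and> j < k)")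
      case True
      then have "{#(i,j),(h,k)#} \<in> K2_gens n" using v unfolding K2_gens_def vertsD_def by blast
      moreover have "{#(i,j),(h,k)#} \<subseteq># mset_set F" using sub2[OF fin] pq by auto
      ultimately show ?thesis unfolding in_monomial_ideal_def by blast
    next
      case False
      then have hk: "h < i \<and> k < j" using pq(4) by (auto simp: badpair_def cmp_def)
      have "{#(h,k),(i,j)#} \<in> K2_gens n" using v hk unfolding K2_gens_def vertsD_def by blast
      moreover have "{#(h,k),(i,j)#} \<subseteq># mset_set F" using sub2[OF fin] pq by auto
      ultimately show ?thesis unfolding in_monomial_ideal_def by blast
    qed
  qed
  then show ?thesis using F unfolding DeltaP_def by auto
qed

lemma calA_props:
  assumes "A \<in> calA n m"
  shows "finite A" "card A = m" "A \<subseteq> {1..n}" "\<And>i j. i \<in> A \<Longrightarrow> j \<in> A \<Longrightarrow> i + j \<noteq> n + 1"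
  using assms unfolding calA_def by (auto intro: finite_subset)

lemma T_sub_verts: assumes "A \<in> calA n m" shows "T_of A \<subseteq> vertsD n"
  using calA_props[OF assms] unfolding T_of_def vertsD_def by force

lemma DeltaA_iff:
  assumes A: "A \<in> calA n m"
  shows "F \<in> DeltaA n A \<longleftrightarrow> F \<subseteq> T_of A \<and> achain F"
proof -
  have "F \<in> DeltaP n \<longleftrightarrow> achain F" if F: "F \<subseteq> T_of A"
  proof -
    have "badpair n p q \<longleftrightarrow> cmp p q" if "p \<in> F" "q \<in> F" for p q
    proof -
      have "fst p \<in> A" "snd p \<in> A" "fst q \<in> A" "snd q \<in> A" using that F by (auto simp: T_of_def)
      then show ?thesis using calA_props(4)[OF A] unfolding badpair_def by auto
    qed
    then show ?thesis using DeltaP_iff[of F n] F T_sub_verts[OF A] unfolding achain_def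
      by (auto simp: cmp_def)
  qed
  then show ?thesis unfolding DeltaA_def by auto
qed

lemma facetA_iff:
  assumes A: "A \<in> calA n m"
  shows "facet (DeltaA n A) F \<longleftrightarrow> F \<subseteq> T_of A \<and> achain F \<and> card F = m"
proof
  have fA: "finite A" "card A = m" using calA_props[OF A] by auto
  assume f: "facet (DeltaA n A) F"
  then have F: "F \<subseteq> T_of A" "achain F" using DeltaA_iff[OF A] unfolding facet_def by auto
  have le: "card F \<le> m" using card_bound[OF fA(1) F] fA by simp
  have "\<not> card F < m"
  proof
    assume "card F < m"
    then obtain t where t: "t \<in> T_of A" "t \<notin> F" "\<forall>q\<in>F. \<not> cmp t q"
      using extend[OF fA(1) F] fA by auto
    have "achain (insert t F)" using F(2) t(3) unfolding achain_def cmp_def by auto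
    then have "insert t F \<in> DeltaA n A" using DeltaA_iff[OF A] F t by auto
    then have "insert t F = F" using f unfolding facet_def by blast
    then show False using t by auto
  qed
  then show "F \<subseteq> T_of A \<and> achain F \<and> card F = m" using F le by auto
next
  have fA: "finite A" "card A = m" using calA_props[OF A] by auto
  assume F: "F \<subseteq> T_of A \<and> achain F \<and> card F = m"
  show "facet (DeltaA n A) F" unfolding facet_def
  proof (intro conjI ballI impI)
    show "F \<in> DeltaA n A" using F DeltaA_iff[OF A] by auto
    fix G assume G: "G \<in> DeltaA n A" "F \<subseteq> G"
    then have G2: "G \<subseteq> T_of A" "achain G" using DeltaA_iff[OF A] by auto
    have "card G \<le> m" using card_bound[OF fA(1) G2] fA by simp
    moreover have "finite G" using G2 T_finite[OF fA(1)] finite_subset by blast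
    ultimately show "G = F" using F G(2) by (metis card_seteq)
  qed
qed

lemma compl:
  assumes n: "n = 2 * m" and A: "A \<in> calA n m" and c: "c \<in> {1..n}"
  shows "c \<in> A \<or> n + 1 - c \<in> A"
proof -
  define f where "f a = min a (n + 1 - a)" for a :: nat
  have P: "finite A" "card A = m" "A \<subseteq> {1..n}" "\<And>i j. i \<in> A \<Longrightarrow> j \<in> A \<Longrightarrow> i + j \<noteq> n + 1"
    using calA_props[OF A] by auto
  have inj: "inj_on f A"
  proof (rule inj_onI)
    fix a b assume ab: "a \<in> A" "b \<in> A" "f a = f b"
    have "a \<le> n" "b \<le> n" using ab P(3) by auto
    then show "a = b" using ab(3) P(4)[OF ab(1) ab(2)] unfolding f_def by (auto simp: min_def split: if_splits)
  qed
  have sub: "f ` A \<subseteq> {1..m}"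
  proof
    fix y assume "y \<in> f ` A"
    then obtain a where a: "a \<in> A" "y = f a" by auto
    then have "1 \<le> a" "a \<le> n" using P(3) by auto
    then show "y \<in> {1..m}" using a n unfolding f_def by auto
  qed
  have "f ` A = {1..m}" using card_image[OF inj] P(2) sub by (intro card_subset_eq) auto
  moreover have "f c \<in> {1..m}" using c n unfolding f_def by auto
  ultimately obtain a where a: "a \<in> A" "f a = f c" by (metis imageE)
  have "a \<le> n" using a P(3) by auto
  then have "a = c \<or> a = n + 1 - c" using a(2) c unfolding f_def by (auto simp: min_def split: if_splits)
  then show ?thesis using a(1) by auto
qed

lemma face_verts: "G \<in> DeltaP n \<Longrightarrow> G \<subseteq> vertsD n"
  unfolding DeltaP_def by auto

lemma no_compl:
  assumes n: "n = 2 * m" and G: "G \<in> DeltaP n" and a: "a \<in> coords G" and b: "b \<in> coords G"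
  shows "a + b \<noteq> n + 1"
proof
  assume s: "a + b = n + 1"
  obtain p where p: "p \<in> G" "a = fst p \<or> a = snd p" using a unfolding coords_def by auto
  obtain q where q: "q \<in> G" "b = fst q \<or> b = snd q" using b unfolding coords_def by auto
  have GV: "G \<subseteq> vertsD n" using face_verts[OF G] .
  show False
  proof (cases "p = q")
    case True
    have "fst p + snd p \<noteq> n + 1" using GV p(1) by (auto simp: vertsD_def)
    then show False using p q True s n by (auto; presburger)
  next
    case False
    then have "\<not> badpair n p q" using DeltaP_iff[OF GV] G p(1) q(1) by blast
    then show False using p(2) q(2) s unfolding badpair_def by auto
  qed
qed

lemma coords_range: "G \<in> DeltaP n \<Longrightarrow> coords G \<subseteq> {1..n}"
  using face_verts[of G n] unfolding coords_def vertsD_def by force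

lemma coords_sub_T: "G \<in> DeltaP n \<Longrightarrow> coords G \<subseteq> A \<Longrightarrow> G \<subseteq> T_of A"
  using face_verts[of G n] unfolding coords_def vertsD_def T_of_def by force

lemma coords_within:
  assumes n: "n = 2 * m" and A: "A \<in> calA n m" and G: "G \<in> DeltaP n"
    and c: "A - {i} \<subseteq> coords G"
  shows "coords G \<subseteq> A \<union> {n + 1 - i}"
proof
  fix c assume cG: "c \<in> coords G"
  then have c1: "c \<in> {1..n}" using coords_range[OF G] by auto
  show "c \<in> A \<union> {n + 1 - i}"
  proof (rule ccontr)
    assume "c \<notin> A \<union> {n + 1 - i}"
    then have "n + 1 - c \<in> A" "n + 1 - c \<noteq> i" using compl[OF n A c1] c1 by auto
    then have "n + 1 - c \<in> coords G" using assms(4) by auto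
    then have "c + (n + 1 - c) \<noteq> n + 1" using no_compl[OF n G cG] by blast
    then show False using c1 by auto
  qed
qed

lemma Aprime_calA:
  assumes n: "n = 2 * m" and A: "A \<in> calA n m" and i: "i \<in> A"
  shows "(A - {i}) \<union> {n + 1 - i} \<in> calA n m"
proof -
  have P: "finite A" "card A = m" "A \<subseteq> {1..n}" "\<And>i j. i \<in> A \<Longrightarrow> j \<in> A \<Longrightarrow> i + j \<noteq> n + 1"
    using calA_props[OF A] by auto
  have i1: "1 \<le> i" "i \<le> n" using i P(3) by auto
  have ni: "n + 1 - i \<notin> A" using P(4)[OF i] i1 by force
  have "card ((A - {i}) \<union> {n + 1 - i}) = m" using ni P(1,2) i
    by (simp add: card_Diff_singleton) (metis One_nat_def Suc_pred card_gt_0_iff empty_iff)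
  moreover have "(A - {i}) \<union> {n + 1 - i} \<subseteq> {1..n}" using P(3) i1 by auto
  moreover have "\<forall>a\<in>(A - {i}) \<union> {n + 1 - i}. \<forall>b\<in>(A - {i}) \<union> {n + 1 - i}. a + b \<noteq> n + 1"
  proof (intro ballI)
    fix a b assume a: "a \<in> (A - {i}) \<union> {n + 1 - i}" and b: "b \<in> (A - {i}) \<union> {n + 1 - i}"
    show "a + b \<noteq> n + 1"
    proof (cases "a = n + 1 - i")
      case True
      then show ?thesis
      proof (cases "b = n + 1 - i")
        case True then show ?thesis using \<open>a = n + 1 - i\<close> i1 n by presburger
      next
        case False then have "b \<in> A" "b \<noteq> i" using b by auto
        then show ?thesis using True i1 by auto
      qed
    next
      case False
      then have aA: "a \<in> A" "a \<noteq> i" using a by auto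
      show ?thesis
      proof (cases "b = n + 1 - i")
        case True then show ?thesis using aA i1 by auto
      next
        case False then have "b \<in> A" using b by auto
        then show ?thesis using P(4) aA by auto
      qed
    qed
  qed
  ultimately show ?thesis unfolding calA_def by blast
qed

lemma facetP_of:
  assumes n: "n = 2 * m" and A: "A \<in> calA n m" and F: "F \<subseteq> T_of A" "achain F" "card F = m"
  shows "facet (DeltaP n) F"
proof -
  have fA: "finite A" "card A = m" using calA_props[OF A] by auto
  have FD: "F \<in> DeltaP n" using DeltaA_iff[OF A] F unfolding DeltaA_def by auto
  have cov: "A \<subseteq> coords F" using cover[OF fA(1) F(1,2)] F(3) fA(2) by auto
  show ?thesis unfolding facet_def
  proof (intro conjI ballI impI FD)
    fix G assume G: "G \<in> DeltaP n" "F \<subseteq> G"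
    have "coords F \<subseteq> coords G" using G(2) unfolding coords_def by auto
    then have "A \<subseteq> coords G" using cov by blast
    then have "coords G \<subseteq> A \<union> {n + 1 - a}" if "a \<in> A" for a
      using coords_within[OF n A G(1), of a] by auto
    have cG: "coords G \<subseteq> A"
    proof
      fix c assume c: "c \<in> coords G"
      show "c \<in> A"
      proof (rule ccontr)
        assume "c \<notin> A"
        moreover have c1: "c \<in> {1..n}" using coords_range[OF G(1)] c by blast
        ultimately have "n + 1 - c \<in> A" using compl[OF n A] by blast
        then have "n + 1 - c \<in> coords G" using \<open>A \<subseteq> coords G\<close> by blast
        then have "c + (n + 1 - c) \<noteq> n + 1" using no_compl[OF n G(1) c] by blast
        then show False using c1 by auto
      qed
    qed
    have GT: "G \<subseteq> T_of A" using coords_sub_T[OF G(1) cG] .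
    then have "G \<in> DeltaA n A" using G(1) unfolding DeltaA_def by auto
    then have "achain G" using DeltaA_iff[OF A] by auto
    then have "card G \<le> m" using card_bound[OF fA(1) GT] fA by simp
    moreover have "finite G" using GT T_finite[OF fA(1)] finite_subset by blast
    ultimately show "G = F" using F G(2) by (metis card_seteq)
  qed
qed

lemma facetA_of_facetP:
  assumes "facet (DeltaP n) F" "F \<subseteq> T_of A"
  shows "facet (DeltaA n A) F"
  using assms unfolding facet_def DeltaA_def by auto



lemma coords_eq_T:
  assumes n: "n = 2 * m" and A: "A \<in> calA n m" and G: "G \<in> DeltaP n" and c: "A \<subseteq> coords G"
  shows "G \<subseteq> T_of A"
proof -
  have "coords G \<subseteq> A"
  proof
    fix c assume c: "c \<in> coords G"
    show "c \<in> A"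
    proof (rule ccontr)
      assume "c \<notin> A"
      moreover have c1: "c \<in> {1..n}" using coords_range[OF G] c by blast
      ultimately have "n + 1 - c \<in> A" using compl[OF n A] by blast
      then have "n + 1 - c \<in> coords G" using assms(4) by blast
      then have "c + (n + 1 - c) \<noteq> n + 1" using no_compl[OF n G c] by blast
      then show False using c1 by auto
    qed
  qed
  then show ?thesis using coords_sub_T[OF G] by blast
qed

lemma one_more:
  assumes D: "finite D" and SF: "S \<subseteq> F" and F: "F \<subseteq> T_of D" "achain F" and cd: "card F = card S + 1"
  shows "\<exists>t. F = insert t S \<and> t \<notin> S \<and> t \<in> T_of D \<and> (\<forall>q\<in>S. \<not> cmp t q)"
proof -
  have fF: "finite F" using F(1) T_finite[OF D] finite_subset by blast
  then have fS: "finite S" using SF finite_subset by blast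
  have "F - S \<noteq> {}" using cd SF fS by auto
  then obtain t where t: "t \<in> F" "t \<notin> S" by blast
  have sub: "insert t S \<subseteq> F" using t SF by auto
  have "card (insert t S) = card F" using t fS cd by simp
  then have eq: "F = insert t S" using card_seteq[OF fF sub] by simp
  have "\<forall>q\<in>S. \<not> cmp t q" using F(2) t(1) SF unfolding achain_def by blast
  then show ?thesis using eq t F(1) by blast
qed

lemma has_coord:
  assumes B: "finite B" and S: "S \<subseteq> T_of B" "achain S" and eq: "card S = card B"
    and t: "t \<in> T_of (insert e B)" "t \<notin> S" "\<forall>q\<in>S. \<not> cmp t q"
  shows "e = fst t \<or> e = snd t"
proof (rule ccontr)
  assume "\<not> ?thesis"
  then have "t \<in> T_of B" using t(1) by (auto simp: T_of_def)
  then show False using maximal[OF B S eq _ t(2)] t(3) by blast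
qed

theorem lemma5p2:
  fixes m n :: nat and A :: "nat set" and P :: "(nat \<times> nat) set" and x :: "nat \<times> nat"
  assumes "n = 2 * m"
    and "facet (DeltaP n) P"
    and "A \<in> calA n m"
    and "facet (DeltaA n A) P"
    and "x \<in> P"
  shows "(left_turn A P x \<or> right_turn A P x \<longrightarrow>
            (\<exists>Q. {F. facet (DeltaP n) F \<and> P - {x} \<subseteq> F} = {P, Q} \<and> Q \<noteq> P \<and>
                 facet (DeltaA n A) Q \<and>
                 (\<forall>Q'. facet (DeltaA n A) Q' \<and> Q' \<noteq> P \<and> P - {x} \<subseteq> Q' \<longrightarrow> Q' = Q)))
       \<and> (\<forall>i. isolated A P x \<and> i \<in> A \<and> is_index P x i \<longrightarrow>
            (let A' = (A - {i}) \<union> {n + 1 - i} in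
              P - {x} \<in> DeltaA n A' \<and>
              (\<exists>Q. {F. facet (DeltaP n) F \<and> P - {x} \<subseteq> F} = {P, Q} \<and> Q \<noteq> P \<and>
                   facet (DeltaA n A') Q \<and> P - {x} \<subseteq> Q \<and>
                   (\<forall>Q'. facet (DeltaA n A') Q' \<and> P - {x} \<subseteq> Q' \<longrightarrow> Q' = Q))))"
proof -
  note n = assms(1) and PfP = assms(2) and A = assms(3) and PfA = assms(4) and x = assms(5)
  have fA: "finite A" "card A = m" using calA_props[OF A] by auto
  have PT: "P \<subseteq> T_of A" "achain P" "card P = m" using PfA facetA_iff[OF A] by auto
  have mx: "\<exists>q\<in>P. cmp t q" if "t \<in> T_of A" "t \<notin> P" for t
    using maximal[OF fA(1) PT(1,2)] PT(3) fA(2) that by auto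
  have covP: "A \<subseteq> coords P" using cover[OF fA(1) PT(1,2)] PT(3) fA(2) by auto
  define S where "S = P - {x}"
  have fP: "finite P" using PT(1) T_finite[OF fA(1)] finite_subset by blast
  have P0: "card P > 0" using x fP card_gt_0_iff by blast
  have cS: "card S = m - 1" "m \<ge> 1" using x fP PT(3) P0 unfolding S_def
    by (auto simp: card_Diff_singleton)
  have SP: "S \<subseteq> P" "achain S" unfolding S_def using PT(2) by (auto simp: achain_def)
  have PS: "P = insert x S" using x unfolding S_def by auto
  have part1: "left_turn A P x \<or> right_turn A P x \<longrightarrow>
            (\<exists>Q. {F. facet (DeltaP n) F \<and> S \<subseteq> F} = {P, Q} \<and> Q \<noteq> P \<and>
                 facet (DeltaA n A) Q \<and>
                 (\<forall>Q'. facet (DeltaA n A) Q' \<and> Q' \<noteq> P \<and> S \<subseteq> Q' \<longrightarrow> Q' = Q))"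
  proof
    assume turn: "left_turn A P x \<or> right_turn A P x"
    obtain y where y: "good A P x y" using turn_good[OF fA(1) PT(1,2) mx x turn] by blast
    have yT: "y \<in> T_of A" "y \<notin> P" "\<forall>q\<in>S. \<not> cmp y q"
      and yu: "\<And>t. t \<in> T_of A \<Longrightarrow> t \<notin> S \<Longrightarrow> \<forall>q\<in>S. \<not> cmp t q \<Longrightarrow> t = x \<or> t = y"
      and yc: "fst x \<in> coords S" "snd x \<in> coords S"
      using y unfolding good_def S_def by blast+
    have covS: "A \<subseteq> coords S"
    proof
      fix a assume "a \<in> A"
      then have "a \<in> coords P" using covP by auto
      then obtain p where p: "p \<in> P" "a = fst p \<or> a = snd p" unfolding coords_def by auto
      show "a \<in> coords S"
      proof (cases "p = x")
        case True then show ?thesis using p yc by auto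
      next
        case False then have "p \<in> S" using p unfolding S_def by auto
        then show ?thesis using p unfolding coords_def by auto
      qed
    qed
    define Q where "Q = insert y S"
    have yS: "y \<notin> S" using yT SP by auto
    have QT: "Q \<subseteq> T_of A" "achain Q" "card Q = m"
    proof -
      show "Q \<subseteq> T_of A" using yT SP PT unfolding Q_def by auto
      show "achain Q" using SP(2) yT(3) unfolding Q_def achain_def cmp_def by auto
      have "finite S" using fP SP finite_subset by blast
      then show "card Q = m" using yS cS unfolding Q_def by simp
    qed
    have QfA: "facet (DeltaA n A) Q" using facetA_iff[OF A] QT by blast
    have QfP: "facet (DeltaP n) Q" using facetP_of[OF n A QT] .
    have QP: "Q \<noteq> P" using yT(2) unfolding Q_def by auto
    have uni: "F = P \<or> F = Q" if F: "facet (DeltaA n A) F" "S \<subseteq> F" for F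
    proof -
      have FT: "F \<subseteq> T_of A" "achain F" "card F = m" using F(1) facetA_iff[OF A] by auto
      obtain t where t: "F = insert t S" "t \<notin> S" "t \<in> T_of A" "\<forall>q\<in>S. \<not> cmp t q"
        using one_more[OF fA(1) F(2) FT(1,2)] FT(3) cS by auto
      then have "t = x \<or> t = y" using yu by blast
      then show ?thesis using t(1) PS unfolding Q_def by auto
    qed
    have "{F. facet (DeltaP n) F \<and> S \<subseteq> F} = {P, Q}"
    proof (intro equalityI subsetI)
      fix F assume "F \<in> {F. facet (DeltaP n) F \<and> S \<subseteq> F}"
      then have F: "facet (DeltaP n) F" "S \<subseteq> F" by auto
      have FD: "F \<in> DeltaP n" using F(1) unfolding facet_def by auto
      have "coords S \<subseteq> coords F" using F(2) unfolding coords_def by auto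
      then have "F \<subseteq> T_of A" using coords_eq_T[OF n A FD] covS by blast
      then have "facet (DeltaA n A) F" using facetA_of_facetP[OF F(1)] by blast
      then show "F \<in> {P, Q}" using uni F(2) by auto
    next
      fix F assume "F \<in> {P, Q}"
      then show "F \<in> {F. facet (DeltaP n) F \<and> S \<subseteq> F}" using PfP QfP SP unfolding Q_def by auto
    qed
    then show "\<exists>Q. {F. facet (DeltaP n) F \<and> S \<subseteq> F} = {P, Q} \<and> Q \<noteq> P \<and>
                 facet (DeltaA n A) Q \<and>
                 (\<forall>Q'. facet (DeltaA n A) Q' \<and> Q' \<noteq> P \<and> S \<subseteq> Q' \<longrightarrow> Q' = Q)"
      using QP QfA uni by blast
  qed
  have part2: "(let A' = (A - {i}) \<union> {n + 1 - i} in
              S \<in> DeltaA n A' \<and>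
              (\<exists>Q. {F. facet (DeltaP n) F \<and> S \<subseteq> F} = {P, Q} \<and> Q \<noteq> P \<and>
                   facet (DeltaA n A') Q \<and> S \<subseteq> Q \<and>
                   (\<forall>Q'. facet (DeltaA n A') Q' \<and> S \<subseteq> Q' \<longrightarrow> Q' = Q)))"
    if i: "i \<in> A" "is_index P x i" for i
  proof -
    define c where "c = n + 1 - i"
    define B where "B = A - {i}"
    define A' where "A' = (A - {i}) \<union> {n + 1 - i}"
    have A'c: "A' = insert c B" unfolding A'_def B_def c_def by auto
    have A'cal: "A' \<in> calA n m" using Aprime_calA[OF n A i(1)] unfolding A'_def .
    have fA': "finite A'" "card A' = m" using calA_props[OF A'cal] by auto
    have i1: "1 \<le> i" "i \<le> n" using calA_props(3)[OF A] i(1) by auto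
    have cA: "c \<notin> A" using calA_props(4)[OF A i(1)] i1 unfolding c_def by force
    have cB: "c \<notin> B" using cA unfolding B_def by auto
    have fB: "finite B" "card B = m - 1" using fA i(1) unfolding B_def by auto
    have ix: "i = fst x \<or> i = snd x" and io: "\<And>q. q \<in> P \<Longrightarrow> i = fst q \<or> i = snd q \<Longrightarrow> q = x"
      using i(2) unfolding is_index_def by auto
    have ST: "S \<subseteq> T_of B"
    proof
      fix q assume q: "q \<in> S"
      then have "q \<in> P" "q \<noteq> x" unfolding S_def by auto
      then have "i \<noteq> fst q" "i \<noteq> snd q" using io by blast+
      then show "q \<in> T_of B" using \<open>q \<in> P\<close> PT(1) unfolding B_def T_of_def by auto
    qed
    have cSB: "card S = card B" using cS fB by simp
    have ST': "S \<subseteq> T_of A'" using ST unfolding A'c T_of_def by auto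
    have SD: "S \<in> DeltaA n A'" using DeltaA_iff[OF A'cal] ST' SP(2) by auto
    have covS: "B \<subseteq> coords S" using cover[OF fB(1) ST SP(2) cSB] by blast
    obtain t where t: "t \<in> T_of A'" "t \<notin> S" "\<forall>q\<in>S. \<not> cmp t q"
      using extend[OF fA'(1) ST' SP(2)] cS fA' by auto
    have tc: "c = fst t \<or> c = snd t" using has_coord[OF fB(1) ST SP(2) cSB _ t(2,3)] t(1) A'c by blast
    define Q where "Q = insert t S"
    have QT: "Q \<subseteq> T_of A'" "achain Q" "card Q = m"
    proof -
      show "Q \<subseteq> T_of A'" using t ST' unfolding Q_def by auto
      show "achain Q" using SP(2) t(3) unfolding Q_def achain_def cmp_def by auto
      have "finite S" using fP SP finite_subset by blast
      then show "card Q = m" using t(2) cS unfolding Q_def by simp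
    qed
    have QfA: "facet (DeltaA n A') Q" using facetA_iff[OF A'cal] QT by blast
    have QfP: "facet (DeltaP n) Q" using facetP_of[OF n A'cal QT] .
    have tP: "t \<notin> P" using tc cA PT(1) unfolding T_of_def by auto
    have QP: "Q \<noteq> P" using tP unfolding Q_def by auto
    have xT: "x \<in> T_of (insert i B)" using x PT(1) i(1) unfolding B_def by (auto simp: insert_absorb)
    have xS: "\<forall>q\<in>S. \<not> cmp x q" using PT(2) x SP unfolding achain_def by auto
    have iB: "i \<notin> B" unfolding B_def by auto
    have AiB: "A = insert i B" using i(1) unfolding B_def by auto
    have uniA: "F = P" if F: "facet (DeltaA n A) F" "S \<subseteq> F" for F
    proof -
      have FT: "F \<subseteq> T_of A" "achain F" "card F = m" using F(1) facetA_iff[OF A] by auto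
      obtain s where s: "F = insert s S" "s \<notin> S" "s \<in> T_of A" "\<forall>q\<in>S. \<not> cmp s q"
        using one_more[OF fA(1) F(2) FT(1,2)] FT(3) cS by auto
      have sc: "i = fst s \<or> i = snd s" using has_coord[OF fB(1) ST SP(2) cSB _ s(2,4)] s(3) AiB by blast
      have sT: "s \<in> T_of (insert i B)" using s(3) AiB by simp
      have "s = x" using unique_c[OF fB(1) ST SP(2) cSB iB sT sc s(4) xT ix xS] .
      then show ?thesis using s(1) PS by auto
    qed
    have uniA': "F = Q" if F: "facet (DeltaA n A') F" "S \<subseteq> F" for F
    proof -
      have FT: "F \<subseteq> T_of A'" "achain F" "card F = m" using F(1) facetA_iff[OF A'cal] by auto
      obtain s where s: "F = insert s S" "s \<notin> S" "s \<in> T_of A'" "\<forall>q\<in>S. \<not> cmp s q"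
        using one_more[OF fA'(1) F(2) FT(1,2)] FT(3) cS by auto
      have sc: "c = fst s \<or> c = snd s" using has_coord[OF fB(1) ST SP(2) cSB _ s(2,4)] s(3) A'c by blast
      have sT: "s \<in> T_of (insert c B)" using s(3) A'c by simp
      have tT: "t \<in> T_of (insert c B)" using t(1) A'c by simp
      have "s = t" using unique_c[OF fB(1) ST SP(2) cSB cB sT sc s(4) tT tc t(3)] .
      then show ?thesis using s(1) unfolding Q_def by auto
    qed
    have "{F. facet (DeltaP n) F \<and> S \<subseteq> F} = {P, Q}"
    proof (intro equalityI subsetI)
      fix F assume "F \<in> {F. facet (DeltaP n) F \<and> S \<subseteq> F}"
      then have F: "facet (DeltaP n) F" "S \<subseteq> F" by auto
      have FD: "F \<in> DeltaP n" using F(1) unfolding facet_def by auto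
      have "coords S \<subseteq> coords F" using F(2) unfolding coords_def by auto
      then have cF: "A - {i} \<subseteq> coords F" using covS unfolding B_def by blast
      have within: "coords F \<subseteq> A \<union> {n + 1 - i}" using coords_within[OF n A FD cF] .
      have notboth: "\<not> (i \<in> coords F \<and> c \<in> coords F)"
        using no_compl[OF n FD, of i c] i1 unfolding c_def by auto
      show "F \<in> {P, Q}"
      proof (cases "c \<in> coords F")
        case True
        then have "coords F \<subseteq> A'" using within notboth unfolding A'_def c_def by auto
        then have "F \<subseteq> T_of A'" using coords_sub_T[OF FD] by blast
        then have "facet (DeltaA n A') F" using facetA_of_facetP[OF F(1)] by blast
        then show ?thesis using uniA' F(2) by auto
      next
        case False
        then have "coords F \<subseteq> A" using within unfolding c_def by auto
        then have "F \<subseteq> T_of A" using coords_sub_T[OF FD] by blast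
        then have "facet (DeltaA n A) F" using facetA_of_facetP[OF F(1)] by blast
        then show ?thesis using uniA F(2) by auto
      qed
    next
      fix F assume "F \<in> {P, Q}"
      then show "F \<in> {F. facet (DeltaP n) F \<and> S \<subseteq> F}" using PfP QfP SP unfolding Q_def by auto
    qed
    moreover have "S \<subseteq> Q" unfolding Q_def by auto
    ultimately show ?thesis unfolding Let_def A'_def[symmetric] using SD QP QfA uniA' by blast
  qed
  show ?thesis unfolding S_def[symmetric]
  proof (intro conjI allI impI)
    show "\<exists>Q. {F. facet (DeltaP n) F \<and> S \<subseteq> F} = {P, Q} \<and> Q \<noteq> P \<and>
                 facet (DeltaA n A) Q \<and>
                 (\<forall>Q'. facet (DeltaA n A) Q' \<and> Q' \<noteq> P \<and> S \<subseteq> Q' \<longrightarrow> Q' = Q)"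
      if "left_turn A P x \<or> right_turn A P x" using part1 that by (rule mp)
    fix i assume "isolated A P x \<and> i \<in> A \<and> is_index P x i"
    then show "let A' = (A - {i}) \<union> {n + 1 - i} in
              S \<in> DeltaA n A' \<and>
              (\<exists>Q. {F. facet (DeltaP n) F \<and> S \<subseteq> F} = {P, Q} \<and> Q \<noteq> P \<and>
                   facet (DeltaA n A') Q \<and> S \<subseteq> Q \<and>
                   (\<forall>Q'. facet (DeltaA n A') Q' \<and> S \<subseteq> Q' \<longrightarrow> Q' = Q))"
      using part2 by blast
  qed
qed

end
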